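(* Let $\mathscr T$ be a functor satisfying (T1)–(T4) and $\mathfrak K=(K,\bigsqcup,\odot,{}^*,{\sim},e)$ a $\mathscr T$-based orthomodular dynamic algebra. Then (i) $K$ (with its quantale order $\sqsubseteq$) is an atomic lattice whose atoms are exactly the elements of $\mathscr T(K)$; (ii) the structure $\mathscr P(\mathscr T(\mathfrak K))=(\mathscr P(\mathscr T(K)),\bigcup,\boxdot,{}^\star,\boxtimes,\{e\})$ is a $\mathscr T$-based orthomodular dynamic algebra, and $h_{\mathfrak K}$ is an isomorphism from $\mathfrak K$ onto it.
   Context: Here $h_{\mathfrak K}\colon K\to\mathscr P(\mathscr T(K))$ is $h_{\mathfrak K}(v)=\{w\in\mathscr T(K)\mid w\sqsubseteq v\}$, and on the powerset $\mathscr P(\mathscr T(K))$: $A\boxdot B=h_{\mathfrak K}(\bigsqcup A\odot\bigsqcup B)$, $A^\star=h_{\mathfrak K}((\bigsqcup A)^* )$, $\boxtimes A=h_{\mathfrak K}({\sim}\bigsqcup A)$, joins are unions, unit $\{e\}$. An involutive unital quantale is $(Q,\bigsqcup,\odot,{}^*,e)$: $Q$ a complete join-semilattice (order $\sqsubseteq$), $\odot$ associative and distributing over arbitrary joins in each argument, $e$ a unit, ${}^*$ with $x^{**}=x$, $(x\odot y)^*=y^*\odot x^*$, $(\bigsqcup x_i)^*=\bigsqcup x_i^*$. An involutive generalized dynamic algebra (IDA) is such a quantale with ${\sim}\colon K\to K$ satisfying, for all $x,y$ and families $(x_i)$: ${\sim}(x\odot{\sim}{\sim}y)={\sim}(x\odot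 y)$; ${\sim}(\bigsqcup{\sim}{\sim}x_i)={\sim}(\bigsqcup x_i)$; $({\sim}x)^*={\sim}x$; ${\sim}{\sim}({\sim}{\sim}x\odot y)={\sim}({\sim}x\sqcup{\sim}({\sim}x\sqcup y))$. Test set $\widetilde K=\{{\sim}k\}$; $\bigvee W={\sim}{\sim}\bigsqcup W$; $w^\perp={\sim}w$; $k\preceq l$ iff $\bigvee\{k,l\}=l$; $k\bullet v={\sim}{\sim}(k\odot v)$; $k\equiv l$ iff $k\bullet w=l\bullet w$ for all $w\in\widetilde K$. IDA morphisms preserve joins, $\odot$, ${}^*$, unit, ${\sim}$ (category $\mathbb{IDA}$); isomorphisms are bijective morphisms; semi-Foulis means $(\widetilde K,\preceq,{}^\perp)$ is a complete orthomodular lattice. $\mathbb{IM}$: involutive monoids and homomorphisms. For a complete orthomodular lattice $\mathcal M$: $\pi_m(x)=m\wedge(m^\perp\vee x)$; $\mathbf{Lin}(\mathcal M)$ is the set of maps $f$ admitting $f^*$ with $f(x)\le y^\perp\iff x\le f^*(y)^\perp$, an IDA under pointwise joins, composition, ${}^*$, $\mathrm{id}$, ${\sim}f=\pi_{f(1)^\perp}$; for an involutive submonoid $L\supseteq\{\pi_m\}$, $\mathscr P(L)$ is the IDA of subsets of $L$ with union, setwise composition and involution, unit $\{\mathrm{id}\}$, ${\sim}A=\{\pi_{(\bigvee_{a\in A}a(1))^\perp}\}$. $\mathscr T\colon\mathbb{IDA}\to\mathbb{IM}$ satisfies: (T1) $\widetilde K\subseteq\mathscr T(K)\subseteq K$,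 $\mathscr T(K)$ an involutive submonoid; (T2) for semi-Foulis $\mathfrak K$ with $s=t\iff s\equiv t$ on $\mathscr T(K)$, $k\mapsto k\bullet(-)$ is an isomorphism $\mathscr T(\mathfrak K)\to\mathscr T(\mathbf{Lin}(\widetilde{\mathfrak K}))$; (T3) $f\mapsto\{f\}$ is an isomorphism $\mathscr T(\mathbf{Lin}(\mathcal M))\to\mathscr T(\mathscr P(\mathscr T(\mathbf{Lin}(\mathcal M))))$; (T4) $\mathscr T(f)$ is the restriction of $f$. A $\mathscr T$-based orthomodular dynamic algebra is an IDA with: (TODA1) $(\widetilde K,\preceq,{}^\perp)$ a complete orthomodular lattice; (TODA2) every $A$ with $\mathscr T(K)\subseteq A\subseteq K$ closed under $\odot$, ${}^*$, arbitrary joins equals $K$; (TODA3) for $S,T\subseteq\mathscr T(K)$, $\bigsqcup S=\bigsqcup T$ iff $S=T$; (TODA4) for $s,t\in\mathscr T(K)$, $s=t$ iff $s\equiv t$. *)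

theory Defs
  imports "HOL-Library.FuncSet"
begin

record 'a ida =
  ida_carrier :: "'a set"
  ida_jn      :: "'a set \<Rightarrow> 'a"
  ida_mult    :: "'a \<Rightarrow> 'a \<Rightarrow> 'a"
  ida_inv     :: "'a \<Rightarrow> 'a"
  ida_neg     :: "'a \<Rightarrow> 'a"
  ida_unit    :: "'a"

definition ida_le :: "('a, 'b) ida_scheme \<Rightarrow> 'a \<Rightarrow> 'a \<Rightarrow> bool" where
  "ida_le K x y \<longleftrightarrow> ida_jn K {x, y} = y"

definition is_IDA :: "('a, 'b) ida_scheme \<Rightarrow> bool" where
  "is_IDA K \<longleftrightarrow>
     (let C = ida_carrier K; jn = ida_jn K; m = ida_mult K; i = ida_inv K;
          n = ida_neg K; e = ida_unit K; le = ida_le K in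
     \<comment> \<open>complete join-semilattice\<close>
     (\<forall>x\<in>C. le x x) \<and>
     (\<forall>x\<in>C. \<forall>y\<in>C. le x y \<and> le y x \<longrightarrow> x = y) \<and>
     (\<forall>x\<in>C. \<forall>y\<in>C. \<forall>z\<in>C. le x y \<and> le y z \<longrightarrow> le x z) \<and>
     (\<forall>S. S \<subseteq> C \<longrightarrow> jn S \<in> C \<and> (\<forall>x\<in>S. le x (jn S)) \<and>
            (\<forall>u\<in>C. (\<forall>x\<in>S. le x u) \<longrightarrow> le (jn S) u)) \<and>
     \<comment> \<open>multiplication\<close>
     (\<forall>x\<in>C. \<forall>y\<in>C. m x y \<in> C) \<and>
     (\<forall>x\<in>C. \<forall>y\<in>C. \<forall>z\<in>C. m (m x y) z = m x (m y z)) \<and>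
     (\<forall>S y. S \<subseteq> C \<and> y \<in> C \<longrightarrow>
         m (jn S) y = jn ((\<lambda>x. m x y) ` S) \<and> m y (jn S) = jn ((\<lambda>x. m y x) ` S)) \<and>
     e \<in> C \<and> (\<forall>x\<in>C. m e x = x \<and> m x e = x) \<and>
     \<comment> \<open>involution\<close>
     (\<forall>x\<in>C. i x \<in> C \<and> i (i x) = x) \<and>
     (\<forall>x\<in>C. \<forall>y\<in>C. i (m x y) = m (i y) (i x)) \<and>
     (\<forall>S. S \<subseteq> C \<longrightarrow> i (jn S) = jn (i ` S)) \<and>
     \<comment> \<open>the operation \<sim>\<close>
     (\<forall>x\<in>C. n x \<in> C) \<and>
     (\<forall>x\<in>C. \<forall>y\<in>C. n (m x (n (n y))) = n (m x y)) \<and>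
     (\<forall>S. S \<subseteq> C \<longrightarrow> n (jn (n ` n ` S)) = n (jn S)) \<and>
     (\<forall>x\<in>C. i (n x) = n x) \<and>
     (\<forall>x\<in>C. \<forall>y\<in>C. n (n (m (n (n x)) y)) = n (jn {n x, n (jn {n x, y})})))"

definition ida_tests :: "('a, 'b) ida_scheme \<Rightarrow> 'a set" where
  "ida_tests K = ida_neg K ` ida_carrier K"

definition ida_bigvee :: "('a, 'b) ida_scheme \<Rightarrow> 'a set \<Rightarrow> 'a" where
  "ida_bigvee K W = ida_neg K (ida_neg K (ida_jn K W))"

definition test_le :: "('a, 'b) ida_scheme \<Rightarrow> 'a \<Rightarrow> 'a \<Rightarrow> bool" where
  "test_le K k l \<longleftrightarrow> ida_bigvee K {k, l} = l"

definition ida_bullet :: "('a, 'b) ida_scheme \<Rightarrow> 'a \<Rightarrow> 'a \<Rightarrow> 'a" where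
  "ida_bullet K k v = ida_neg K (ida_neg K (ida_mult K k v))"

definition ida_equiv :: "('a, 'b) ida_scheme \<Rightarrow> 'a \<Rightarrow> 'a \<Rightarrow> bool" where
  "ida_equiv K k l \<longleftrightarrow> (\<forall>w\<in>ida_tests K. ida_bullet K k w = ida_bullet K l w)"

definition ida_morphism :: "('a, 'c) ida_scheme \<Rightarrow> ('b, 'd) ida_scheme \<Rightarrow> ('a \<Rightarrow> 'b) \<Rightarrow> bool" where
  "ida_morphism K K' f \<longleftrightarrow>
     f \<in> ida_carrier K \<rightarrow> ida_carrier K' \<and>
     (\<forall>S. S \<subseteq> ida_carrier K \<longrightarrow> f (ida_jn K S) = ida_jn K' (f ` S)) \<and>
     (\<forall>x\<in>ida_carrier K. \<forall>y\<in>ida_carrier K. f (ida_mult K x y) = ida_mult K' (f x) (f y)) \<and>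
     (\<forall>x\<in>ida_carrier K. f (ida_inv K x) = ida_inv K' (f x)) \<and>
     (\<forall>x\<in>ida_carrier K. f (ida_neg K x) = ida_neg K' (f x)) \<and>
     f (ida_unit K) = ida_unit K'"

definition ida_iso :: "('a, 'c) ida_scheme \<Rightarrow> ('b, 'd) ida_scheme \<Rightarrow> ('a \<Rightarrow> 'b) \<Rightarrow> bool" where
  "ida_iso K K' f \<longleftrightarrow> ida_morphism K K' f \<and> bij_betw f (ida_carrier K) (ida_carrier K')"

definition im_iso :: "('a, 'c) ida_scheme \<Rightarrow> ('b, 'd) ida_scheme \<Rightarrow> ('a \<Rightarrow> 'b) \<Rightarrow> 'a set \<Rightarrow> 'b set \<Rightarrow> bool" where
  "im_iso K K' f S S' \<longleftrightarrow> bij_betw f S S' \<and>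
     (\<forall>x\<in>S. \<forall>y\<in>S. f (ida_mult K x y) = ida_mult K' (f x) (f y)) \<and>
     (\<forall>x\<in>S. f (ida_inv K x) = ida_inv K' (f x)) \<and>
     f (ida_unit K) = ida_unit K'"

definition is_lub :: "'x set \<Rightarrow> ('x \<Rightarrow> 'x \<Rightarrow> bool) \<Rightarrow> 'x set \<Rightarrow> 'x \<Rightarrow> bool" where
  "is_lub M le S u \<longleftrightarrow> u \<in> M \<and> (\<forall>x\<in>S. le x u) \<and> (\<forall>v\<in>M. (\<forall>x\<in>S. le x v) \<longrightarrow> le u v)"

definition is_glb :: "'x set \<Rightarrow> ('x \<Rightarrow> 'x \<Rightarrow> bool) \<Rightarrow> 'x set \<Rightarrow> 'x \<Rightarrow> bool" where
  "is_glb M le S u \<longleftrightarrow> u \<in> M \<and> (\<forall>x\<in>S. le u x) \<and> (\<forall>v\<in>M. (\<forall>x\<in>S. le v x) \<longrightarrow> le v u)"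

definition lsup :: "'x set \<Rightarrow> ('x \<Rightarrow> 'x \<Rightarrow> bool) \<Rightarrow> 'x set \<Rightarrow> 'x" where
  "lsup M le S = (THE u. is_lub M le S u)"

definition linf :: "'x set \<Rightarrow> ('x \<Rightarrow> 'x \<Rightarrow> bool) \<Rightarrow> 'x set \<Rightarrow> 'x" where
  "linf M le S = (THE u. is_glb M le S u)"

definition complete_oml :: "'x set \<Rightarrow> ('x \<Rightarrow> 'x \<Rightarrow> bool) \<Rightarrow> ('x \<Rightarrow> 'x) \<Rightarrow> bool" where
  "complete_oml M le oc \<longleftrightarrow>
     (\<forall>x\<in>M. le x x) \<and>
     (\<forall>x\<in>M. \<forall>y\<in>M. le x y \<and> le y x \<longrightarrow> x = y) \<and>
     (\<forall>x\<in>M. \<forall>y\<in>M. \<forall>z\<in>M. le x y \<and> le y z \<longrightarrow> le x z) \<and>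
     (\<forall>S. S \<subseteq> M \<longrightarrow> (\<exists>u. is_lub M le S u)) \<and>
     (\<forall>x\<in>M. oc x \<in> M \<and> oc (oc x) = x) \<and>
     (\<forall>x\<in>M. \<forall>y\<in>M. le x y \<longrightarrow> le (oc y) (oc x)) \<and>
     (\<forall>x\<in>M. lsup M le {x, oc x} = lsup M le M \<and> linf M le {x, oc x} = lsup M le {}) \<and>
     (\<forall>x\<in>M. \<forall>y\<in>M. le x y \<longrightarrow> y = lsup M le {x, linf M le {y, oc x}})"

definition semi_foulis :: "('a, 'b) ida_scheme \<Rightarrow> bool" where
  "semi_foulis K \<longleftrightarrow> complete_oml (ida_tests K) (test_le K) (ida_neg K)"

definition oml_proj :: "'x set \<Rightarrow> ('x \<Rightarrow> 'x \<Rightarrow> bool) \<Rightarrow> ('x \<Rightarrow> 'x) \<Rightarrow> 'x \<Rightarrow> ('x \<Rightarrow> 'x)" where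
  "oml_proj M le oc m = (\<lambda>x\<in>M. linf M le {m, lsup M le {oc m, x}})"

definition is_adjoint :: "'x set \<Rightarrow> ('x \<Rightarrow> 'x \<Rightarrow> bool) \<Rightarrow> ('x \<Rightarrow> 'x) \<Rightarrow> ('x \<Rightarrow> 'x) \<Rightarrow> ('x \<Rightarrow> 'x) \<Rightarrow> bool" where
  "is_adjoint M le oc f g \<longleftrightarrow> g \<in> M \<rightarrow>\<^sub>E M \<and>
     (\<forall>x\<in>M. \<forall>y\<in>M. le (f x) (oc y) \<longleftrightarrow> le x (oc (g y)))"

definition lin_maps :: "'x set \<Rightarrow> ('x \<Rightarrow> 'x \<Rightarrow> bool) \<Rightarrow> ('x \<Rightarrow> 'x) \<Rightarrow> ('x \<Rightarrow> 'x) set" where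
  "lin_maps M le oc = {f \<in> M \<rightarrow>\<^sub>E M. \<exists>g. is_adjoint M le oc f g}"

definition Lin :: "'x set \<Rightarrow> ('x \<Rightarrow> 'x \<Rightarrow> bool) \<Rightarrow> ('x \<Rightarrow> 'x) \<Rightarrow> ('x \<Rightarrow> 'x) ida" where
  "Lin M le oc =
     \<lparr> ida_carrier = lin_maps M le oc,
       ida_jn = (\<lambda>F. \<lambda>x\<in>M. lsup M le ((\<lambda>f. f x) ` F)),
       ida_mult = (\<lambda>f g. \<lambda>x\<in>M. f (g x)),
       ida_inv = (\<lambda>f. THE g. is_adjoint M le oc f g),
       ida_neg = (\<lambda>f. oml_proj M le oc (oc (f (lsup M le M)))),
       ida_unit = (\<lambda>x\<in>M. x) \<rparr>"

definition PL :: "'x set \<Rightarrow> ('x \<Rightarrow> 'x \<Rightarrow> bool) \<Rightarrow> ('x \<Rightarrow> 'x) \<Rightarrow> ('x \<Rightarrow> 'x) set \<Rightarrow> ('x \<Rightarrow> 'x) set ida" where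
  "PL M le oc L =
     \<lparr> ida_carrier = Pow L,
       ida_jn = (\<lambda>\<A>. \<Union>\<A>),
       ida_mult = (\<lambda>A B. {ida_mult (Lin M le oc) f g | f g. f \<in> A \<and> g \<in> B}),
       ida_inv = (\<lambda>A. ida_inv (Lin M le oc) ` A),
       ida_neg = (\<lambda>A. {oml_proj M le oc (oc (lsup M le ((\<lambda>a. a (lsup M le M)) ` A)))}),
       ida_unit = {ida_unit (Lin M le oc)} \<rparr>"

definition Lin_tests :: "('a, 'b) ida_scheme \<Rightarrow> ('a \<Rightarrow> 'a) ida" where
  "Lin_tests K = Lin (ida_tests K) (test_le K) (ida_neg K)"

section \<open>The functor T (conditions T1--T4, instance-wise)\<close>

definition T1_cond :: "('a ida \<Rightarrow> 'a set) \<Rightarrow> bool" where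
  "T1_cond T \<longleftrightarrow> (\<forall>K. is_IDA K \<longrightarrow>
     ida_tests K \<subseteq> T K \<and> T K \<subseteq> ida_carrier K \<and> ida_unit K \<in> T K \<and>
     (\<forall>x\<in>T K. \<forall>y\<in>T K. ida_mult K x y \<in> T K) \<and> (\<forall>x\<in>T K. ida_inv K x \<in> T K))"

definition T2_cond :: "('a ida \<Rightarrow> 'a set) \<Rightarrow> (('a \<Rightarrow> 'a) ida \<Rightarrow> ('a \<Rightarrow> 'a) set) \<Rightarrow> bool" where
  "T2_cond T TL \<longleftrightarrow> (\<forall>K. is_IDA K \<and> semi_foulis K \<and>
       (\<forall>s\<in>T K. \<forall>t\<in>T K. s = t \<longleftrightarrow> ida_equiv K s t) \<longrightarrow>
     im_iso K (Lin_tests K) (\<lambda>k. \<lambda>w\<in>ida_tests K. ida_bullet K k w) (T K) (TL (Lin_tests K)))"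

definition T3_cond :: "(('x \<Rightarrow> 'x) ida \<Rightarrow> ('x \<Rightarrow> 'x) set) \<Rightarrow> (('x \<Rightarrow> 'x) set ida \<Rightarrow> ('x \<Rightarrow> 'x) set set) \<Rightarrow> bool" where
  "T3_cond TL TP \<longleftrightarrow> (\<forall>M le oc. complete_oml M le oc \<longrightarrow>
     im_iso (Lin M le oc) (PL M le oc (TL (Lin M le oc))) (\<lambda>f. {f})
            (TL (Lin M le oc)) (TP (PL M le oc (TL (Lin M le oc)))))"

text \<open>T4: T(f) is the restriction of f; in particular f maps T(K) into T(K').\<close>
definition T4_cond :: "('a ida \<Rightarrow> 'a set) \<Rightarrow> ('b ida \<Rightarrow> 'b set) \<Rightarrow> bool" where
  "T4_cond T T' \<longleftrightarrow> (\<forall>K K' f. is_IDA K \<and> is_IDA K' \<and> ida_morphism K K' f \<longrightarrow> f ` T K \<subseteq> T' K')"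

text \<open>The functor T restricted to the carrier types relevant here: 'a, 'a set, the
  Lin-types over them and the powerset IDAs over those.\<close>
definition T_functor ::
  "('a ida \<Rightarrow> 'a set) \<Rightarrow> ('a set ida \<Rightarrow> 'a set set) \<Rightarrow>
   (('a \<Rightarrow> 'a) ida \<Rightarrow> ('a \<Rightarrow> 'a) set) \<Rightarrow> (('a set \<Rightarrow> 'a set) ida \<Rightarrow> ('a set \<Rightarrow> 'a set) set) \<Rightarrow>
   (('a \<Rightarrow> 'a) set ida \<Rightarrow> ('a \<Rightarrow> 'a) set set) \<Rightarrow>
   (('a set \<Rightarrow> 'a set) set ida \<Rightarrow> ('a set \<Rightarrow> 'a set) set set) \<Rightarrow> bool" where
  "T_functor Ta Tp TLa TLp TPa TPp \<longleftrightarrow>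
     T1_cond Ta \<and> T1_cond Tp \<and> T1_cond TLa \<and> T1_cond TLp \<and> T1_cond TPa \<and> T1_cond TPp \<and>
     T2_cond Ta TLa \<and> T2_cond Tp TLp \<and>
     T3_cond TLa TPa \<and> T3_cond TLp TPp \<and>
     T4_cond Ta Ta \<and> T4_cond Ta Tp \<and> T4_cond Tp Ta \<and> T4_cond Tp Tp \<and>
     T4_cond TLa TLa \<and> T4_cond TLa TPa \<and> T4_cond TPa TLa \<and> T4_cond TPa TPa \<and>
     T4_cond TLp TLp \<and> T4_cond TLp TPp \<and> T4_cond TPp TLp \<and> T4_cond TPp TPp"

definition T_ODA :: "('a ida \<Rightarrow> 'a set) \<Rightarrow> 'a ida \<Rightarrow> bool" where
  "T_ODA T K \<longleftrightarrow> is_IDA K \<and>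
     complete_oml (ida_tests K) (test_le K) (ida_neg K) \<and>
     (\<forall>A. T K \<subseteq> A \<and> A \<subseteq> ida_carrier K \<and>
          (\<forall>x\<in>A. \<forall>y\<in>A. ida_mult K x y \<in> A) \<and> (\<forall>x\<in>A. ida_inv K x \<in> A) \<and>
          (\<forall>S. S \<subseteq> A \<longrightarrow> ida_jn K S \<in> A) \<longrightarrow> A = ida_carrier K) \<and>
     (\<forall>S R. S \<subseteq> T K \<and> R \<subseteq> T K \<longrightarrow> (ida_jn K S = ida_jn K R \<longleftrightarrow> S = R)) \<and>
     (\<forall>s\<in>T K. \<forall>t\<in>T K. s = t \<longleftrightarrow> ida_equiv K s t)"

definition ida_bot :: "('a, 'b) ida_scheme \<Rightarrow> 'a" where
  "ida_bot K = ida_jn K {}"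

definition ida_atom :: "('a, 'b) ida_scheme \<Rightarrow> 'a \<Rightarrow> bool" where
  "ida_atom K a \<longleftrightarrow> a \<in> ida_carrier K \<and> a \<noteq> ida_bot K \<and>
     (\<forall>x\<in>ida_carrier K. ida_le K x a \<longrightarrow> x = ida_bot K \<or> x = a)"

definition atomic_lattice :: "('a, 'b) ida_scheme \<Rightarrow> bool" where
  "atomic_lattice K \<longleftrightarrow>
     (\<forall>x\<in>ida_carrier K. \<forall>y\<in>ida_carrier K.
        (\<exists>u. is_lub (ida_carrier K) (ida_le K) {x, y} u) \<and>
        (\<exists>u. is_glb (ida_carrier K) (ida_le K) {x, y} u)) \<and>
     (\<forall>x\<in>ida_carrier K. x \<noteq> ida_bot K \<longrightarrow> (\<exists>a. ida_atom K a \<and> ida_le K a x))"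

definition hK :: "('a ida \<Rightarrow> 'a set) \<Rightarrow> 'a ida \<Rightarrow> 'a \<Rightarrow> 'a set" where
  "hK T K v = {w \<in> T K. ida_le K w v}"

definition PT :: "('a ida \<Rightarrow> 'a set) \<Rightarrow> 'a ida \<Rightarrow> 'a set ida" where
  "PT T K =
     \<lparr> ida_carrier = Pow (T K),
       ida_jn = (\<lambda>\<A>. \<Union>\<A>),
       ida_mult = (\<lambda>A B. hK T K (ida_mult K (ida_jn K A) (ida_jn K B))),
       ida_inv = (\<lambda>A. hK T K (ida_inv K (ida_jn K A))),
       ida_neg = (\<lambda>A. hK T K (ida_neg K (ida_jn K A))),
       ida_unit = {ida_unit K} \<rparr>"

end

theory Submission
  imports Defs
begin

context
  fixes K :: "('a,'b) ida_scheme"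
  assumes IDA: "is_IDA K"
begin

lemma ax1: "(\<forall>x\<in>(ida_carrier K). (ida_le K) x x)"
  using IDA unfolding is_IDA_def Let_def by (elim conjE) assumption
lemma ax2: "(\<forall>x\<in>(ida_carrier K). \<forall>y\<in>(ida_carrier K). (ida_le K) x y \<and> (ida_le K) y x \<longrightarrow> x = y)"
  using IDA unfolding is_IDA_def Let_def by (elim conjE) assumption
lemma ax3: "(\<forall>x\<in>(ida_carrier K). \<forall>y\<in>(ida_carrier K). \<forall>z\<in>(ida_carrier K). (ida_le K) x y \<and> (ida_le K) y z \<longrightarrow> (ida_le K) x z)"
  using IDA unfolding is_IDA_def Let_def by (elim conjE) assumption
lemma ax4: "(\<forall>S. S \<subseteq> (ida_carrier K) \<longrightarrow> (ida_jn K) S \<in> (ida_carrier K) \<and> (\<forall>x\<in>S. (ida_le K) x ((ida_jn K) S)) \<and> (\<forall>u\<in>(ida_carrier K). (\<forall>x\<in>S. (ida_le K) x u) \<longrightarrow> (ida_le K) ((ida_jn K) S) u))"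
  using IDA unfolding is_IDA_def Let_def by (elim conjE) assumption
lemma ax5: "(\<forall>x\<in>(ida_carrier K). \<forall>y\<in>(ida_carrier K). (ida_mult K) x y \<in> (ida_carrier K))"
  using IDA unfolding is_IDA_def Let_def by (elim conjE) assumption
lemma ax6: "(\<forall>x\<in>(ida_carrier K). \<forall>y\<in>(ida_carrier K). \<forall>z\<in>(ida_carrier K). (ida_mult K) ((ida_mult K) x y) z = (ida_mult K) x ((ida_mult K) y z))"
  using IDA unfolding is_IDA_def Let_def by (elim conjE) assumption
lemma ax7: "(\<forall>S y. S \<subseteq> (ida_carrier K) \<and> y \<in> (ida_carrier K) \<longrightarrow> (ida_mult K) ((ida_jn K) S) y = (ida_jn K) ((\<lambda>x. (ida_mult K) x y) ` S) \<and> (ida_mult K) y ((ida_jn K) S) = (ida_jn K) ((\<lambda>x. (ida_mult K) y x) ` S))"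
  using IDA unfolding is_IDA_def Let_def by (elim conjE) assumption
lemma ax8: "(ida_unit K) \<in> (ida_carrier K)"
  using IDA unfolding is_IDA_def Let_def by (elim conjE) assumption
lemma ax9: "(\<forall>x\<in>(ida_carrier K). (ida_mult K) (ida_unit K) x = x \<and> (ida_mult K) x (ida_unit K) = x)"
  using IDA unfolding is_IDA_def Let_def by (elim conjE) assumption
lemma ax10: "(\<forall>x\<in>(ida_carrier K). (ida_inv K) x \<in> (ida_carrier K) \<and> (ida_inv K) ((ida_inv K) x) = x)"
  using IDA unfolding is_IDA_def Let_def by (elim conjE) assumption
lemma ax11: "(\<forall>x\<in>(ida_carrier K). \<forall>y\<in>(ida_carrier K). (ida_inv K) ((ida_mult K) x y) = (ida_mult K) ((ida_inv K) y) ((ida_inv K) x))"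
  using IDA unfolding is_IDA_def Let_def by (elim conjE) assumption
lemma ax12: "(\<forall>S. S \<subseteq> (ida_carrier K) \<longrightarrow> (ida_inv K) ((ida_jn K) S) = (ida_jn K) ((ida_inv K) ` S))"
  using IDA unfolding is_IDA_def Let_def by (elim conjE) assumption
lemma ax13: "(\<forall>x\<in>(ida_carrier K). (ida_neg K) x \<in> (ida_carrier K))"
  using IDA unfolding is_IDA_def Let_def by (elim conjE) assumption
lemma ax14: "(\<forall>x\<in>(ida_carrier K). \<forall>y\<in>(ida_carrier K). (ida_neg K) ((ida_mult K) x ((ida_neg K) ((ida_neg K) y))) = (ida_neg K) ((ida_mult K) x y))"
  using IDA unfolding is_IDA_def Let_def by (elim conjE) assumption
lemma ax15: "(\<forall>S. S \<subseteq> (ida_carrier K) \<longrightarrow> (ida_neg K) ((ida_jn K) ((ida_neg K) ` (ida_neg K) ` S)) = (ida_neg K) ((ida_jn K) S))"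
  using IDA unfolding is_IDA_def Let_def by (elim conjE) assumption
lemma ax16: "(\<forall>x\<in>(ida_carrier K). (ida_inv K) ((ida_neg K) x) = (ida_neg K) x)"
  using IDA unfolding is_IDA_def Let_def by (elim conjE) assumption
lemma ax17: "(\<forall>x\<in>(ida_carrier K). \<forall>y\<in>(ida_carrier K). (ida_neg K) ((ida_neg K) ((ida_mult K) ((ida_neg K) ((ida_neg K) x)) y)) = (ida_neg K) ((ida_jn K) {(ida_neg K) x, (ida_neg K) ((ida_jn K) {(ida_neg K) x, y})}))"
  using IDA unfolding is_IDA_def Let_def by (elim conjE) assumption

lemma le_refl: "x \<in> ida_carrier K \<Longrightarrow> ida_le K x x" using ax1 by blast
lemma le_antisym: "x \<in> ida_carrier K \<Longrightarrow> y \<in> ida_carrier K \<Longrightarrow> ida_le K x y \<Longrightarrow> ida_le K y x \<Longrightarrow> x = y" using ax2 by blast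
lemma le_trans: "x \<in> ida_carrier K \<Longrightarrow> y \<in> ida_carrier K \<Longrightarrow> z \<in> ida_carrier K \<Longrightarrow> ida_le K x y \<Longrightarrow> ida_le K y z \<Longrightarrow> ida_le K x z" using ax3 by blast
lemma jn_closed: "S \<subseteq> ida_carrier K \<Longrightarrow> ida_jn K S \<in> ida_carrier K" using ax4 by blast
lemma jn_upper: "S \<subseteq> ida_carrier K \<Longrightarrow> x \<in> S \<Longrightarrow> ida_le K x (ida_jn K S)" using ax4 by blast
lemma jn_least: "S \<subseteq> ida_carrier K \<Longrightarrow> u \<in> ida_carrier K \<Longrightarrow> (\<And>x. x \<in> S \<Longrightarrow> ida_le K x u) \<Longrightarrow> ida_le K (ida_jn K S) u" using ax4 by blast
lemma m_closed: "x \<in> ida_carrier K \<Longrightarrow> y \<in> ida_carrier K \<Longrightarrow> ida_mult K x y \<in> ida_carrier K" using ax5 by blast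
lemma m_assoc: "x \<in> ida_carrier K \<Longrightarrow> y \<in> ida_carrier K \<Longrightarrow> z \<in> ida_carrier K \<Longrightarrow> ida_mult K (ida_mult K x y) z = ida_mult K x (ida_mult K y z)" using ax6 by blast
lemma m_distl: "S \<subseteq> ida_carrier K \<Longrightarrow> y \<in> ida_carrier K \<Longrightarrow> ida_mult K (ida_jn K S) y = ida_jn K ((\<lambda>x. ida_mult K x y) ` S)" using ax7 by blast
lemma m_distr: "S \<subseteq> ida_carrier K \<Longrightarrow> y \<in> ida_carrier K \<Longrightarrow> ida_mult K y (ida_jn K S) = ida_jn K ((\<lambda>x. ida_mult K y x) ` S)" using ax7 by blast
lemma e_closed: "ida_unit K \<in> ida_carrier K" using ax8 by blast
lemma e_left: "x \<in> ida_carrier K \<Longrightarrow> ida_mult K (ida_unit K) x = x" using ax9 by blast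
lemma e_right: "x \<in> ida_carrier K \<Longrightarrow> ida_mult K x (ida_unit K) = x" using ax9 by blast
lemma i_closed: "x \<in> ida_carrier K \<Longrightarrow> ida_inv K x \<in> ida_carrier K" using ax10 by blast
lemma i_i: "x \<in> ida_carrier K \<Longrightarrow> ida_inv K (ida_inv K x) = x" using ax10 by blast
lemma i_m: "x \<in> ida_carrier K \<Longrightarrow> y \<in> ida_carrier K \<Longrightarrow> ida_inv K (ida_mult K x y) = ida_mult K (ida_inv K y) (ida_inv K x)" using ax11 by blast
lemma i_jn: "S \<subseteq> ida_carrier K \<Longrightarrow> ida_inv K (ida_jn K S) = ida_jn K (ida_inv K ` S)" using ax12 by blast
lemma n_closed: "x \<in> ida_carrier K \<Longrightarrow> ida_neg K x \<in> ida_carrier K" using ax13 by blast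
lemma n_ax1: "x \<in> ida_carrier K \<Longrightarrow> y \<in> ida_carrier K \<Longrightarrow> ida_neg K (ida_mult K x (ida_neg K (ida_neg K y))) = ida_neg K (ida_mult K x y)" using ax14 by blast
lemma n_ax2: "S \<subseteq> ida_carrier K \<Longrightarrow> ida_neg K (ida_jn K (ida_neg K ` ida_neg K ` S)) = ida_neg K (ida_jn K S)" using ax15 by blast
lemma n_ax3: "x \<in> ida_carrier K \<Longrightarrow> ida_inv K (ida_neg K x) = ida_neg K x" using ax16 by blast
lemma n_ax4: "x \<in> ida_carrier K \<Longrightarrow> y \<in> ida_carrier K \<Longrightarrow> ida_neg K (ida_neg K (ida_mult K (ida_neg K (ida_neg K x)) y)) = ida_neg K (ida_jn K {ida_neg K x, ida_neg K (ida_jn K {ida_neg K x, y})})" using ax17 by blast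

lemma jn_eqI:
  assumes "X \<subseteq> ida_carrier K" "Y \<subseteq> ida_carrier K"
    and "\<And>u. u \<in> ida_carrier K \<Longrightarrow> (\<forall>x\<in>X. ida_le K x u) \<longleftrightarrow> (\<forall>y\<in>Y. ida_le K y u)"
  shows "ida_jn K X = ida_jn K Y"
proof (rule le_antisym)
  show "ida_jn K X \<in> ida_carrier K" "ida_jn K Y \<in> ida_carrier K" using assms jn_closed by auto
  show "ida_le K (ida_jn K X) (ida_jn K Y)"
    using assms(1,2) jn_closed jn_upper assms(3)[of "ida_jn K Y"] by (intro jn_least) auto
  show "ida_le K (ida_jn K Y) (ida_jn K X)"
    using assms(1,2) jn_closed jn_upper assms(3)[of "ida_jn K X"] by (intro jn_least) auto
qed

lemma jn_jn:
  assumes "\<And>S. S \<in> SS \<Longrightarrow> S \<subseteq> ida_carrier K"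
  shows "ida_jn K (ida_jn K ` SS) = ida_jn K (\<Union>SS)"
proof (rule jn_eqI)
  show "ida_jn K ` SS \<subseteq> ida_carrier K" using assms jn_closed by auto
  show "\<Union>SS \<subseteq> ida_carrier K" using assms by auto
  fix u assume u: "u \<in> ida_carrier K"
  show "(\<forall>x\<in>ida_jn K ` SS. ida_le K x u) = (\<forall>y\<in>\<Union>SS. ida_le K y u)"
  proof
    assume H: "\<forall>x\<in>ida_jn K ` SS. ida_le K x u"
    show "\<forall>y\<in>\<Union>SS. ida_le K y u"
    proof
      fix y assume "y \<in> \<Union>SS"
      then obtain S where S: "S \<in> SS" "y \<in> S" by auto
      then show "ida_le K y u" using H assms[OF S(1)] le_trans[of y "ida_jn K S" u] jn_upper jn_closed u
        by blast
    qed
  next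
    assume H: "\<forall>y\<in>\<Union>SS. ida_le K y u"
    show "\<forall>x\<in>ida_jn K ` SS. ida_le K x u"
      using H assms jn_least u by blast
  qed
qed

lemma jn_single: "x \<in> ida_carrier K \<Longrightarrow> ida_jn K {x} = x"
  by (rule le_antisym) (auto intro: jn_closed jn_least le_refl jn_upper)

lemma jn_pair_le: "x \<in> ida_carrier K \<Longrightarrow> y \<in> ida_carrier K \<Longrightarrow> ida_le K x y \<longleftrightarrow> ida_jn K {x,y} = y"
  unfolding ida_le_def by simp

end

context
  fixes T :: "'a ida \<Rightarrow> 'a set" and K :: "'a ida"
  assumes T1: "T1_cond T" and TO: "T_ODA T K"
begin

lemma IDA: "is_IDA K" using TO unfolding T_ODA_def by blast

lemma TC: "T K \<subseteq> ida_carrier K" using T1 IDA unfolding T1_cond_def by blast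
lemma T_tests: "ida_tests K \<subseteq> T K" using T1 IDA unfolding T1_cond_def by blast
lemma T_e: "ida_unit K \<in> T K" using T1 IDA unfolding T1_cond_def by blast
lemma T_m: "x \<in> T K \<Longrightarrow> y \<in> T K \<Longrightarrow> ida_mult K x y \<in> T K" using T1 IDA unfolding T1_cond_def by blast
lemma T_i: "x \<in> T K \<Longrightarrow> ida_inv K x \<in> T K" using T1 IDA unfolding T1_cond_def by blast

lemma TODA2: "T K \<subseteq> A \<Longrightarrow> A \<subseteq> ida_carrier K \<Longrightarrow>
          (\<forall>x\<in>A. \<forall>y\<in>A. ida_mult K x y \<in> A) \<Longrightarrow> (\<forall>x\<in>A. ida_inv K x \<in> A) \<Longrightarrow>
          (\<forall>S. S \<subseteq> A \<longrightarrow> ida_jn K S \<in> A) \<Longrightarrow> A = ida_carrier K"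
  using TO unfolding T_ODA_def by blast
lemma TODA3: "S \<subseteq> T K \<Longrightarrow> R \<subseteq> T K \<Longrightarrow> ida_jn K S = ida_jn K R \<longleftrightarrow> S = R"
  using TO unfolding T_ODA_def by blast

lemma repr: assumes x: "x \<in> ida_carrier K" shows "\<exists>S\<subseteq>T K. x = ida_jn K S"
proof -
  let ?A = "ida_jn K ` Pow (T K)"
  have sub: "S \<subseteq> T K \<Longrightarrow> S \<subseteq> ida_carrier K" for S using TC by blast
  have "?A = ida_carrier K"
  proof (rule TODA2)
    show "T K \<subseteq> ?A"
    proof
      fix t assume "t \<in> T K"
      then have "t = ida_jn K {t}" using jn_single[OF IDA] TC by auto
      then show "t \<in> ?A" using \<open>t \<in> T K\<close> by blast
    qed
    show "?A \<subseteq> ida_carrier K" using jn_closed[OF IDA] sub by auto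
    show "\<forall>x\<in>?A. \<forall>y\<in>?A. ida_mult K x y \<in> ?A"
    proof (intro ballI)
      fix x y assume "x \<in> ?A" "y \<in> ?A"
      then obtain S R where S: "S \<subseteq> T K" "x = ida_jn K S" and R: "R \<subseteq> T K" "y = ida_jn K R" by blast
      have "ida_mult K x y = ida_jn K ((\<lambda>s. ida_mult K s (ida_jn K R)) ` S)"
        unfolding S(2) R(2) using m_distl[OF IDA sub[OF S(1)] jn_closed[OF IDA sub[OF R(1)]]] .
      also have "\<dots> = ida_jn K ((\<lambda>s. ida_jn K ((\<lambda>r. ida_mult K s r) ` R)) ` S)"
      proof (intro arg_cong[where f="ida_jn K"] image_cong[OF refl])
        fix s assume "s \<in> S" then have "s \<in> ida_carrier K" using S(1) TC by blast
        then show "ida_mult K s (ida_jn K R) = ida_jn K ((\<lambda>r. ida_mult K s r) ` R)"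
          using m_distr[OF IDA sub[OF R(1)]] by blast
      qed
      also have "\<dots> = ida_jn K (ida_jn K ` ((\<lambda>s. (\<lambda>r. ida_mult K s r) ` R) ` S))"
        by (simp add: image_image)
      also have "\<dots> = ida_jn K (\<Union> ((\<lambda>s. (\<lambda>r. ida_mult K s r) ` R) ` S))"
      proof (rule jn_jn[OF IDA])
        fix X assume "X \<in> (\<lambda>s. (\<lambda>r. ida_mult K s r) ` R) ` S"
        then obtain s where "s \<in> S" "X = (\<lambda>r. ida_mult K s r) ` R" by blast
        then show "X \<subseteq> ida_carrier K" using S(1) R(1) TC m_closed[OF IDA] by blast
      qed
      finally show "ida_mult K x y \<in> ?A" using S R T_m by blast
    qed
    show "\<forall>x\<in>?A. ida_inv K x \<in> ?A"
    proof
      fix x assume "x \<in> ?A"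
      then obtain S where S: "S \<subseteq> T K" "x = ida_jn K S" by blast
      then have "ida_inv K x = ida_jn K (ida_inv K ` S)" using i_jn[OF IDA] sub by blast
      then show "ida_inv K x \<in> ?A" using S T_i by blast
    qed
    show "\<forall>S. S \<subseteq> ?A \<longrightarrow> ida_jn K S \<in> ?A"
    proof (intro allI impI)
      fix SS assume SS: "SS \<subseteq> ?A"
      define R where "R = {S \<in> Pow (T K). ida_jn K S \<in> SS}"
      have "SS = ida_jn K ` R" using SS unfolding R_def by blast
      moreover have "ida_jn K (ida_jn K ` R) = ida_jn K (\<Union>R)"
        by (rule jn_jn[OF IDA]) (use sub in \<open>auto simp: R_def\<close>)
      ultimately have "ida_jn K SS = ida_jn K (\<Union>R)" by simp
      then show "ida_jn K SS \<in> ?A" unfolding R_def by blast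
    qed
  qed
  then show ?thesis using x by blast
qed

lemma le_jn_iff: assumes "S \<subseteq> T K" "R \<subseteq> T K"
  shows "ida_le K (ida_jn K S) (ida_jn K R) \<longleftrightarrow> S \<subseteq> R"
proof -
  have "ida_jn K {ida_jn K S, ida_jn K R} = ida_jn K (ida_jn K ` {S, R})" by simp
  also have "\<dots> = ida_jn K (\<Union>{S, R})"
  proof (rule jn_jn[OF IDA])
    fix X assume "X \<in> {S, R}" then show "X \<subseteq> ida_carrier K" using assms TC by blast
  qed
  also have "\<dots> = ida_jn K (S \<union> R)" by simp
  finally have "ida_le K (ida_jn K S) (ida_jn K R) \<longleftrightarrow> ida_jn K (S \<union> R) = ida_jn K R"
    unfolding ida_le_def by simp
  also have "\<dots> \<longleftrightarrow> S \<union> R = R" using TODA3[of "S \<union> R" R] assms by simp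
  finally show ?thesis by blast
qed

lemma T_jn: "t \<in> T K \<Longrightarrow> ida_jn K {t} = t" using jn_single[OF IDA] TC by blast

lemma h_jn: assumes "S \<subseteq> T K" shows "hK T K (ida_jn K S) = S"
proof -
  have "w \<in> T K \<Longrightarrow> ida_le K w (ida_jn K S) \<longleftrightarrow> w \<in> S" for w
    using le_jn_iff[of "{w}" S] assms T_jn by auto
  then show ?thesis unfolding hK_def using assms by blast
qed

lemma jn_h: assumes "x \<in> ida_carrier K" shows "ida_jn K (hK T K x) = x"
  using repr[OF assms] h_jn by auto

lemma h_sub: "hK T K x \<subseteq> T K" unfolding hK_def by blast

lemma bot_notT: "t \<in> T K \<Longrightarrow> t \<noteq> ida_bot K"
  unfolding ida_bot_def using TODA3[of "{t}" "{}"] T_jn by auto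

lemma atoms: "{a. ida_atom K a} = T K"
proof (intro set_eqI iffI; simp)
  fix a assume A: "ida_atom K a"
  then have aC: "a \<in> ida_carrier K" and nb: "a \<noteq> ida_bot K"
    and mx: "\<forall>x\<in>ida_carrier K. ida_le K x a \<longrightarrow> x = ida_bot K \<or> x = a"
    unfolding ida_atom_def by auto
  obtain S where S: "S \<subseteq> T K" "a = ida_jn K S" using repr[OF aC] by blast
  have "S \<noteq> {}" using S nb unfolding ida_bot_def by auto
  then obtain t where t: "t \<in> S" by blast
  have "ida_le K t a" using le_jn_iff[of "{t}" S] S t T_jn by auto
  then have "t = ida_bot K \<or> t = a" using mx t S TC by blast
  then show "a \<in> T K" using bot_notT t S by blast
next
  fix a assume a: "a \<in> T K"
  show "ida_atom K a" unfolding ida_atom_def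
  proof (intro conjI ballI impI)
    show "a \<in> ida_carrier K" using a TC by blast
    show "a \<noteq> ida_bot K" using bot_notT a by blast
    fix x assume x: "x \<in> ida_carrier K" "ida_le K x a"
    obtain S where S: "S \<subseteq> T K" "x = ida_jn K S" using repr[OF x(1)] by blast
    have "S \<subseteq> {a}" using le_jn_iff[of S "{a}"] S x a T_jn by auto
    then have "S = {} \<or> S = {a}" by blast
    then show "x = ida_bot K \<or> x = a" using S T_jn a unfolding ida_bot_def by auto
  qed
qed

lemma atomic: "atomic_lattice K"
  unfolding atomic_lattice_def
proof (intro conjI ballI impI)
  fix x y assume x: "x \<in> ida_carrier K" and y: "y \<in> ida_carrier K"
  show "\<exists>u. is_lub (ida_carrier K) (ida_le K) {x, y} u"
  proof (intro exI)
    have xy: "{x,y} \<subseteq> ida_carrier K" using x y by simp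
    show "is_lub (ida_carrier K) (ida_le K) {x, y} (ida_jn K {x,y})"
      unfolding is_lub_def
    proof (intro conjI ballI impI)
      show "ida_jn K {x, y} \<in> ida_carrier K" by (rule jn_closed[OF IDA xy])
      fix z assume "z \<in> {x,y}" then show "ida_le K z (ida_jn K {x, y})" by (rule jn_upper[OF IDA xy])
    next
      fix v assume "v \<in> ida_carrier K" "\<forall>z\<in>{x, y}. ida_le K z v"
      then show "ida_le K (ida_jn K {x, y}) v" using jn_least[OF IDA xy] by blast
    qed
  qed
  obtain S where S: "S \<subseteq> T K" "x = ida_jn K S" using repr[OF x] by blast
  obtain R where R: "R \<subseteq> T K" "y = ida_jn K R" using repr[OF y] by blast
  show "\<exists>u. is_glb (ida_carrier K) (ida_le K) {x, y} u"
  proof (intro exI)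
    show "is_glb (ida_carrier K) (ida_le K) {x, y} (ida_jn K (S \<inter> R))"
      unfolding is_glb_def
    proof (intro conjI ballI impI)
      show "ida_jn K (S \<inter> R) \<in> ida_carrier K" using jn_closed[OF IDA] S R TC by blast
      fix z assume "z \<in> {x,y}"
      then show "ida_le K (ida_jn K (S \<inter> R)) z" using le_jn_iff[of "S \<inter> R" S] le_jn_iff[of "S \<inter> R" R] S R by auto
    next
      fix v assume v: "v \<in> ida_carrier K" "\<forall>z\<in>{x, y}. ida_le K v z"
      obtain V where V: "V \<subseteq> T K" "v = ida_jn K V" using repr[OF v(1)] by blast
      then show "ida_le K v (ida_jn K (S \<inter> R))" using v le_jn_iff[of V S] le_jn_iff[of V R] le_jn_iff[of V "S \<inter> R"] S R by auto
    qed
  qed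
next
  fix x assume x: "x \<in> ida_carrier K" "x \<noteq> ida_bot K"
  obtain S where S: "S \<subseteq> T K" "x = ida_jn K S" using repr[OF x(1)] by blast
  have "S \<noteq> {}" using S x unfolding ida_bot_def by auto
  then obtain t where t: "t \<in> S" by blast
  have "ida_le K t x" using le_jn_iff[of "{t}" S] S t T_jn by auto
  moreover have "ida_atom K t" using atoms t S by blast
  ultimately show "\<exists>a. ida_atom K a \<and> ida_le K a x" by blast
qed

end

context
  fixes K :: "('a,'b) ida_scheme" and K' :: "('c,'d) ida_scheme" and f :: "'a \<Rightarrow> 'c"
  assumes IDA: "is_IDA K" and MOR: "ida_morphism K K' f"
    and BIJ: "bij_betw f (ida_carrier K) (ida_carrier K')"
begin

lemma f_C: "x \<in> ida_carrier K \<Longrightarrow> f x \<in> ida_carrier K'"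
  using MOR unfolding ida_morphism_def by blast
lemma f_jn: "S \<subseteq> ida_carrier K \<Longrightarrow> f (ida_jn K S) = ida_jn K' (f ` S)"
  using MOR unfolding ida_morphism_def by blast
lemma f_m: "x \<in> ida_carrier K \<Longrightarrow> y \<in> ida_carrier K \<Longrightarrow> f (ida_mult K x y) = ida_mult K' (f x) (f y)"
  using MOR unfolding ida_morphism_def by blast
lemma f_i: "x \<in> ida_carrier K \<Longrightarrow> f (ida_inv K x) = ida_inv K' (f x)"
  using MOR unfolding ida_morphism_def by blast
lemma f_n: "x \<in> ida_carrier K \<Longrightarrow> f (ida_neg K x) = ida_neg K' (f x)"
  using MOR unfolding ida_morphism_def by blast
lemma f_e: "f (ida_unit K) = ida_unit K'"
  using MOR unfolding ida_morphism_def by blast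

lemma f_inj: "x \<in> ida_carrier K \<Longrightarrow> y \<in> ida_carrier K \<Longrightarrow> f x = f y \<longleftrightarrow> x = y"
  using BIJ unfolding bij_betw_def inj_on_def by blast

lemma imgC: "ida_carrier K' = f ` ida_carrier K"
  using BIJ unfolding bij_betw_def by simp

lemma pre: "x' \<in> ida_carrier K' \<Longrightarrow> \<exists>x\<in>ida_carrier K. x' = f x"
  unfolding imgC by (simp add: image_iff)

lemma preS: "S' \<subseteq> ida_carrier K' \<Longrightarrow> \<exists>S\<subseteq>ida_carrier K. S' = f ` S"
  unfolding imgC by (simp add: subset_image_iff)

lemmas cl = jn_closed[OF IDA] m_closed[OF IDA] i_closed[OF IDA] n_closed[OF IDA] e_closed[OF IDA]

lemma le_f: "x \<in> ida_carrier K \<Longrightarrow> y \<in> ida_carrier K \<Longrightarrow> ida_le K' (f x) (f y) \<longleftrightarrow> ida_le K x y"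
proof -
  assume x: "x \<in> ida_carrier K" and y: "y \<in> ida_carrier K"
  have "ida_jn K' {f x, f y} = f (ida_jn K {x,y})" using f_jn[of "{x,y}"] x y by simp
  moreover have "ida_jn K {x,y} \<in> ida_carrier K" using x y cl by simp
  ultimately show ?thesis unfolding ida_le_def using f_inj y by simp
qed

lemma ball_pre: "(\<forall>x'\<in>ida_carrier K'. P x') \<longleftrightarrow> (\<forall>x\<in>ida_carrier K. P (f x))"
  unfolding imgC by simp

lemma all_preS: "(\<forall>S'. S' \<subseteq> ida_carrier K' \<longrightarrow> P S') \<longleftrightarrow> (\<forall>S. S \<subseteq> ida_carrier K \<longrightarrow> P (f ` S))"
  unfolding imgC subset_image_iff by auto

lemma img_cong: "S \<subseteq> ida_carrier K \<Longrightarrow> (\<And>x. x \<in> ida_carrier K \<Longrightarrow> g x = h x) \<Longrightarrow> g ` S = h ` S"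
  by (rule image_cong) auto

lemma p1: "x \<in> ida_carrier K \<Longrightarrow> ida_le K' (f x) (f x)" using le_f le_refl[OF IDA] by blast
lemma p2: "x \<in> ida_carrier K \<Longrightarrow> y \<in> ida_carrier K \<Longrightarrow> ida_le K' (f x) (f y) \<and> ida_le K' (f y) (f x) \<longrightarrow> f x = f y"
    using le_f le_antisym[OF IDA] by blast
lemma p3: "x \<in> ida_carrier K \<Longrightarrow> y \<in> ida_carrier K \<Longrightarrow> z \<in> ida_carrier K \<Longrightarrow> ida_le K' (f x) (f y) \<and> ida_le K' (f y) (f z) \<longrightarrow> ida_le K' (f x) (f z)"
    using le_f le_trans[OF IDA] by blast
lemma p5: "x \<in> ida_carrier K \<Longrightarrow> y \<in> ida_carrier K \<Longrightarrow> ida_mult K' (f x) (f y) \<in> ida_carrier K'" by (simp add: f_m[symmetric] cl f_C)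
lemma p6: assumes x: "x \<in> ida_carrier K" and y: "y \<in> ida_carrier K" and z: "z \<in> ida_carrier K"
  shows "ida_mult K' (ida_mult K' (f x) (f y)) (f z) = ida_mult K' (f x) (ida_mult K' (f y) (f z))"
proof -
  have "f (ida_mult K (ida_mult K x y) z) = f (ida_mult K x (ida_mult K y z))"
    using x y z m_assoc[OF IDA] by simp
  then show ?thesis using x y z by (simp add: f_m cl)
qed
lemma p8: "ida_unit K' \<in> ida_carrier K'" by (simp add: f_e[symmetric] f_C cl)
lemma p9: "x \<in> ida_carrier K \<Longrightarrow> ida_mult K' (ida_unit K') (f x) = f x \<and> ida_mult K' (f x) (ida_unit K') = f x"
    by (simp add: f_e[symmetric] f_m[symmetric] cl e_left[OF IDA] e_right[OF IDA])
lemma p10: "x \<in> ida_carrier K \<Longrightarrow> ida_inv K' (f x) \<in> ida_carrier K' \<and> ida_inv K' (ida_inv K' (f x)) = f x"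
    by (simp add: f_i[symmetric] f_C cl i_i[OF IDA])
lemma p11: assumes x: "x \<in> ida_carrier K" and y: "y \<in> ida_carrier K"
  shows "ida_inv K' (ida_mult K' (f x) (f y)) = ida_mult K' (ida_inv K' (f y)) (ida_inv K' (f x))"
proof -
  have "f (ida_inv K (ida_mult K x y)) = f (ida_mult K (ida_inv K y) (ida_inv K x))"
    using x y i_m[OF IDA] by simp
  then show ?thesis using x y by (simp add: f_m f_i cl)
qed
lemma p13: "x \<in> ida_carrier K \<Longrightarrow> ida_neg K' (f x) \<in> ida_carrier K'" by (simp add: f_n[symmetric] f_C cl)
lemma p14: assumes x: "x \<in> ida_carrier K" and y: "y \<in> ida_carrier K"
  shows "ida_neg K' (ida_mult K' (f x) (ida_neg K' (ida_neg K' (f y)))) = ida_neg K' (ida_mult K' (f x) (f y))"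
proof -
  have "f (ida_neg K (ida_mult K x (ida_neg K (ida_neg K y)))) = f (ida_neg K (ida_mult K x y))"
    using x y n_ax1[OF IDA] by simp
  then show ?thesis using x y by (simp add: f_m f_n cl)
qed
lemma p16: assumes x: "x \<in> ida_carrier K" shows "ida_inv K' (ida_neg K' (f x)) = ida_neg K' (f x)"
proof -
  have "f (ida_inv K (ida_neg K x)) = f (ida_neg K x)"
    using x n_ax3[OF IDA] by simp
  then show ?thesis using x by (simp add: f_i f_n cl)
qed
lemma p17: assumes x: "x \<in> ida_carrier K" and y: "y \<in> ida_carrier K"
  shows "ida_neg K' (ida_neg K' (ida_mult K' (ida_neg K' (ida_neg K' (f x))) (f y))) =
       ida_neg K' (ida_jn K' {ida_neg K' (f x), ida_neg K' (ida_jn K' {ida_neg K' (f x), f y})})"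
proof -
  have "f (ida_neg K (ida_neg K (ida_mult K (ida_neg K (ida_neg K x)) y))) =
        f (ida_neg K (ida_jn K {ida_neg K x, ida_neg K (ida_jn K {ida_neg K x, y})}))"
    using x y n_ax4[OF IDA] by simp
  then show ?thesis using x y by (simp add: f_m f_n f_jn cl)
qed

context fixes S assumes S: "S \<subseteq> ida_carrier K"
begin
lemma jS: "ida_jn K' (f ` S) = f (ida_jn K S)" using f_jn S by simp
lemma p4: "ida_jn K' (f ` S) \<in> ida_carrier K' \<and> (\<forall>x\<in>f ` S. ida_le K' x (ida_jn K' (f ` S))) \<and>
       (\<forall>u\<in>ida_carrier K. (\<forall>x\<in>f ` S. ida_le K' x (f u)) \<longrightarrow> ida_le K' (ida_jn K' (f ` S)) (f u))"
    unfolding jS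
  proof (intro conjI ballI impI)
    show "f (ida_jn K S) \<in> ida_carrier K'" using jn_closed[OF IDA S] f_C by blast
    fix x assume "x \<in> f ` S"
    then obtain s where s: "s \<in> S" "x = f s" by blast
    then show "ida_le K' x (f (ida_jn K S))" using S le_f[of s "ida_jn K S"] jn_closed[OF IDA S] jn_upper[OF IDA S s(1)] by auto
  next
    fix u assume u: "u \<in> ida_carrier K" "\<forall>x\<in>f ` S. ida_le K' x (f u)"
    have "\<forall>x\<in>S. ida_le K x u"
    proof
      fix x assume "x \<in> S" then show "ida_le K x u" using u S le_f[of x u] by auto
    qed
    then show "ida_le K' (f (ida_jn K S)) (f u)" using u le_f[of "ida_jn K S" u] jn_closed[OF IDA S] jn_least[OF IDA S u(1)] by auto
  qed
lemma p12: "ida_inv K' (ida_jn K' (f ` S)) = ida_jn K' (ida_inv K' ` f ` S)"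
  proof -
    have "ida_inv K' ` f ` S = f ` ida_inv K ` S" unfolding image_image using S f_i
      by (intro image_cong) auto
    moreover have "ida_inv K ` S \<subseteq> ida_carrier K" using S cl by blast
    ultimately show ?thesis using S i_jn[OF IDA, OF S] by (simp add: f_jn[symmetric] f_i[symmetric] cl)
  qed
lemma fnj: "A \<subseteq> ida_carrier K \<Longrightarrow> f (ida_neg K (ida_jn K A)) = ida_neg K' (ida_jn K' (f ` A))"
  using f_n[OF jn_closed[OF IDA]] f_jn by metis
lemma p15: "ida_neg K' (ida_jn K' (ida_neg K' ` ida_neg K' ` f ` S)) = ida_neg K' (ida_jn K' (f ` S))"
  proof -
    have e1: "ida_neg K' ` ida_neg K' ` f ` S = f ` (ida_neg K ` ida_neg K ` S)"
    proof -
      have "ida_neg K' ` ida_neg K' ` f ` S = (\<lambda>x. ida_neg K' (ida_neg K' (f x))) ` S" by (simp only: image_image)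
      also have "\<dots> = (\<lambda>x. f (ida_neg K (ida_neg K x))) ` S"
      proof (rule image_cong[OF refl])
        fix x assume "x \<in> S" then have x: "x \<in> ida_carrier K" using S by blast
        show "ida_neg K' (ida_neg K' (f x)) = f (ida_neg K (ida_neg K x))"
          using f_n[OF x] f_n[OF n_closed[OF IDA x]] by simp
      qed
      also have "\<dots> = f ` (ida_neg K ` ida_neg K ` S)" by (simp only: image_image)
      finally show ?thesis .
    qed
    have s1: "ida_neg K ` ida_neg K ` S \<subseteq> ida_carrier K" using S n_closed[OF IDA] by blast
    have "f (ida_neg K (ida_jn K (ida_neg K ` ida_neg K ` S))) = f (ida_neg K (ida_jn K S))"
      using S n_ax2[OF IDA] by simp
    then show ?thesis unfolding e1 fnj[OF s1] fnj[OF S] .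
  qed
lemma p7: assumes y: "y \<in> ida_carrier K"
  shows "ida_mult K' (ida_jn K' (f ` S)) (f y) = ida_jn K' ((\<lambda>x. ida_mult K' x (f y)) ` f ` S) \<and>
       ida_mult K' (f y) (ida_jn K' (f ` S)) = ida_jn K' ((\<lambda>x. ida_mult K' (f y) x) ` f ` S)"
proof
  have e1: "(\<lambda>x. ida_mult K' x (f y)) ` f ` S = f ` (\<lambda>x. ida_mult K x y) ` S"
    unfolding image_image using S f_m[OF _ y] by (intro image_cong) auto
  have s1: "(\<lambda>x. ida_mult K x y) ` S \<subseteq> ida_carrier K" using S y m_closed[OF IDA] by auto
  have "ida_mult K' (ida_jn K' (f ` S)) (f y) = f (ida_mult K (ida_jn K S) y)"
    unfolding jS using f_m[OF jn_closed[OF IDA S] y] by simp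
  also have "\<dots> = f (ida_jn K ((\<lambda>x. ida_mult K x y) ` S))" using m_distl[OF IDA S y] by simp
  also have "\<dots> = ida_jn K' (f ` (\<lambda>x. ida_mult K x y) ` S)" using f_jn[OF s1] .
  finally show "ida_mult K' (ida_jn K' (f ` S)) (f y) = ida_jn K' ((\<lambda>x. ida_mult K' x (f y)) ` f ` S)"
    unfolding e1 .
next
  have e2: "(\<lambda>x. ida_mult K' (f y) x) ` f ` S = f ` (\<lambda>x. ida_mult K y x) ` S"
    unfolding image_image using S f_m[OF y] by (intro image_cong) auto
  have s1: "(\<lambda>x. ida_mult K y x) ` S \<subseteq> ida_carrier K" using S y m_closed[OF IDA] by auto
  have "ida_mult K' (f y) (ida_jn K' (f ` S)) = f (ida_mult K y (ida_jn K S))"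
    unfolding jS using f_m[OF y jn_closed[OF IDA S]] by simp
  also have "\<dots> = f (ida_jn K ((\<lambda>x. ida_mult K y x) ` S))" using m_distr[OF IDA S y] by simp
  also have "\<dots> = ida_jn K' (f ` (\<lambda>x. ida_mult K y x) ` S)" using f_jn[OF s1] .
  finally show "ida_mult K' (f y) (ida_jn K' (f ` S)) = ida_jn K' ((\<lambda>x. ida_mult K' (f y) x) ` f ` S)"
    unfolding e2 .
qed
end

lemma IDA': "is_IDA K'"
  unfolding is_IDA_def Let_def ball_pre all_preS
  apply (intro conjI)
  subgoal by (intro ballI, rule p1, assumption+)
  subgoal by (intro ballI, rule p2, assumption+)
  subgoal by (intro ballI, rule p3, assumption+)
  subgoal by (intro allI impI, rule p4, assumption)
  subgoal by (intro ballI, rule p5, assumption+)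
  subgoal by (intro ballI, rule p6, assumption+)
  subgoal
  proof (intro allI impI, elim conjE)
    fix S' y' assume S': "S' \<subseteq> ida_carrier K'" and y': "y' \<in> ida_carrier K'"
    obtain S where S: "S \<subseteq> ida_carrier K" "S' = f ` S" using preS[OF S'] by blast
    obtain y where y: "y \<in> ida_carrier K" "y' = f y" using pre[OF y'] by blast
    show "ida_mult K' (ida_jn K' S') y' = ida_jn K' ((\<lambda>x. ida_mult K' x y') ` S') \<and>
          ida_mult K' y' (ida_jn K' S') = ida_jn K' ((\<lambda>x. ida_mult K' y' x) ` S')"
      unfolding S(2) y(2) by (rule p7[OF S(1) y(1)])
  qed
  subgoal by (rule p8)
  subgoal by (intro ballI, rule p9, assumption+)
  subgoal by (intro ballI, rule p10, assumption+)
  subgoal by (intro ballI, rule p11, assumption+)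
  subgoal by (intro allI impI, rule p12, assumption)
  subgoal by (intro ballI, rule p13, assumption+)
  subgoal by (intro ballI, rule p14, assumption+)
  subgoal by (intro allI impI, rule p15, assumption)
  subgoal by (intro ballI, rule p16, assumption+)
  subgoal by (intro ballI, rule p17, assumption+)
  done


lemma tests_img: "ida_tests K' = f ` ida_tests K"
proof -
  have "ida_tests K' = ida_neg K' ` f ` ida_carrier K" unfolding ida_tests_def imgC ..
  also have "\<dots> = f ` ida_neg K ` ida_carrier K" unfolding image_image using f_n by (intro image_cong) auto
  finally show ?thesis unfolding ida_tests_def .
qed

lemma tests_C: "ida_tests K \<subseteq> ida_carrier K" unfolding ida_tests_def using n_closed[OF IDA] by blast

lemma tle_f: assumes a: "a \<in> ida_carrier K" and b: "b \<in> ida_carrier K"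
  shows "test_le K' (f a) (f b) \<longleftrightarrow> test_le K a b"
proof -
  have ab: "{a,b} \<subseteq> ida_carrier K" using a b by simp
  have j: "ida_jn K {a,b} \<in> ida_carrier K" using jn_closed[OF IDA ab] .
  have "ida_bigvee K' {f a, f b} = f (ida_bigvee K {a,b})"
    unfolding ida_bigvee_def using f_jn[OF ab] f_n[OF j] f_n[OF n_closed[OF IDA j]] by simp
  moreover have "ida_bigvee K {a,b} \<in> ida_carrier K" unfolding ida_bigvee_def using j n_closed[OF IDA] by blast
  ultimately show ?thesis unfolding test_le_def using f_inj b by simp
qed

lemma bullet_f: assumes k: "k \<in> ida_carrier K" and w: "w \<in> ida_carrier K"
  shows "ida_bullet K' (f k) (f w) = f (ida_bullet K k w)"
proof -
  have m: "ida_mult K k w \<in> ida_carrier K" using m_closed[OF IDA k w] .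
  show ?thesis unfolding ida_bullet_def using f_m[OF k w] f_n[OF m] f_n[OF n_closed[OF IDA m]] by simp
qed

lemma bullet_C: "k \<in> ida_carrier K \<Longrightarrow> w \<in> ida_carrier K \<Longrightarrow> ida_bullet K k w \<in> ida_carrier K"
  unfolding ida_bullet_def using m_closed[OF IDA] n_closed[OF IDA] by blast

lemma equiv_f: assumes s: "s \<in> ida_carrier K" and t: "t \<in> ida_carrier K"
  shows "ida_equiv K' (f s) (f t) \<longleftrightarrow> ida_equiv K s t"
proof -
  have "ida_equiv K' (f s) (f t) \<longleftrightarrow> (\<forall>w\<in>ida_tests K. ida_bullet K' (f s) (f w) = ida_bullet K' (f t) (f w))"
    unfolding ida_equiv_def tests_img by simp
  also have "\<dots> \<longleftrightarrow> (\<forall>w\<in>ida_tests K. ida_bullet K s w = ida_bullet K t w)"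
  proof (intro ball_cong[OF refl])
    fix w assume "w \<in> ida_tests K" then have w: "w \<in> ida_carrier K" using tests_C by blast
    show "(ida_bullet K' (f s) (f w) = ida_bullet K' (f t) (f w)) = (ida_bullet K s w = ida_bullet K t w)"
      unfolding bullet_f[OF s w] bullet_f[OF t w] using f_inj bullet_C s t w by blast
  qed
  finally show ?thesis unfolding ida_equiv_def .
qed

definition ginv where "ginv = inv_into (ida_carrier K) f"

lemma g_C: "x' \<in> ida_carrier K' \<Longrightarrow> ginv x' \<in> ida_carrier K"
  unfolding ginv_def imgC by (rule inv_into_into)
lemma f_g: "x' \<in> ida_carrier K' \<Longrightarrow> f (ginv x') = x'"
  unfolding ginv_def imgC by (rule f_inv_into_f)
lemma g_f: "x \<in> ida_carrier K \<Longrightarrow> ginv (f x) = x"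
  unfolding ginv_def using BIJ unfolding bij_betw_def by (simp add: inv_into_f_f)

lemma g_bij: "bij_betw ginv (ida_carrier K') (ida_carrier K)"
  unfolding ginv_def using BIJ by (rule bij_betw_inv_into)

lemma g_mor: "ida_morphism K' K ginv"
  unfolding ida_morphism_def
proof (intro conjI ballI allI impI)
  show "ginv \<in> ida_carrier K' \<rightarrow> ida_carrier K" using g_C by blast
  fix S' assume S': "S' \<subseteq> ida_carrier K'"
  have gS: "ginv ` S' \<subseteq> ida_carrier K" using g_C S' by blast
  have "f ` ginv ` S' = S'" unfolding image_image using f_g S' by (simp add: subset_iff)
  then have "ida_jn K' S' = f (ida_jn K (ginv ` S'))" using f_jn[OF gS] by simp
  then show "ginv (ida_jn K' S') = ida_jn K (ginv ` S')" using g_f jn_closed[OF IDA gS] by simp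
next
  fix x' y' assume x': "x' \<in> ida_carrier K'" and y': "y' \<in> ida_carrier K'"
  have "ida_mult K' x' y' = f (ida_mult K (ginv x') (ginv y'))" using f_m[OF g_C[OF x'] g_C[OF y']] f_g x' y' by simp
  then show "ginv (ida_mult K' x' y') = ida_mult K (ginv x') (ginv y')"
    using g_f m_closed[OF IDA g_C[OF x'] g_C[OF y']] by simp
next
  fix x' assume x': "x' \<in> ida_carrier K'"
  have "ida_inv K' x' = f (ida_inv K (ginv x'))" using f_i[OF g_C[OF x']] f_g x' by simp
  then show "ginv (ida_inv K' x') = ida_inv K (ginv x')" using g_f i_closed[OF IDA g_C[OF x']] by simp
  have "ida_neg K' x' = f (ida_neg K (ginv x'))" using f_n[OF g_C[OF x']] f_g x' by simp
  then show "ginv (ida_neg K' x') = ida_neg K (ginv x')" using g_f n_closed[OF IDA g_C[OF x']] by simp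
next
  show "ginv (ida_unit K') = ida_unit K" using f_e[symmetric] g_f e_closed[OF IDA] by simp
qed

end

context
  fixes M :: "'x set" and le and oc and M' :: "'y set" and le' and oc' and f :: "'x \<Rightarrow> 'y"
  assumes OML: "complete_oml M le oc"
    and BIJ: "bij_betw f M M'"
    and LE: "\<And>a b. a \<in> M \<Longrightarrow> b \<in> M \<Longrightarrow> le' (f a) (f b) \<longleftrightarrow> le a b"
    and OC: "\<And>a. a \<in> M \<Longrightarrow> oc' (f a) = f (oc a)"
begin

lemma MM: "M' = f ` M" using BIJ unfolding bij_betw_def by simp
lemma finj: "a \<in> M \<Longrightarrow> b \<in> M \<Longrightarrow> f a = f b \<longleftrightarrow> a = b" using BIJ unfolding bij_betw_def inj_on_def by blast

lemma oax1: "\<forall>x\<in>M. le x x" using OML unfolding complete_oml_def by (elim conjE) assumption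
lemma oax2: "\<forall>x\<in>M. \<forall>y\<in>M. le x y \<and> le y x \<longrightarrow> x = y" using OML unfolding complete_oml_def by (elim conjE) assumption
lemma oax3: "\<forall>x\<in>M. \<forall>y\<in>M. \<forall>z\<in>M. le x y \<and> le y z \<longrightarrow> le x z" using OML unfolding complete_oml_def by (elim conjE) assumption
lemma oax4: "\<forall>S. S \<subseteq> M \<longrightarrow> (\<exists>u. is_lub M le S u)" using OML unfolding complete_oml_def by (elim conjE) assumption
lemma oax5: "\<forall>x\<in>M. oc x \<in> M \<and> oc (oc x) = x" using OML unfolding complete_oml_def by (elim conjE) assumption
lemma oax6: "\<forall>x\<in>M. \<forall>y\<in>M. le x y \<longrightarrow> le (oc y) (oc x)" using OML unfolding complete_oml_def by (elim conjE) assumption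
lemma oax7: "\<forall>x\<in>M. lsup M le {x, oc x} = lsup M le M \<and> linf M le {x, oc x} = lsup M le {}" using OML unfolding complete_oml_def by (elim conjE) assumption
lemma oax8: "\<forall>x\<in>M. \<forall>y\<in>M. le x y \<longrightarrow> y = lsup M le {x, linf M le {y, oc x}}" using OML unfolding complete_oml_def by (elim conjE) assumption

lemma o_refl: "x \<in> M \<Longrightarrow> le x x" using oax1 by blast
lemma o_antisym: "x \<in> M \<Longrightarrow> y \<in> M \<Longrightarrow> le x y \<Longrightarrow> le y x \<Longrightarrow> x = y" using oax2 by blast
lemma o_trans: "x \<in> M \<Longrightarrow> y \<in> M \<Longrightarrow> z \<in> M \<Longrightarrow> le x y \<Longrightarrow> le y z \<Longrightarrow> le x z" using oax3 by blast
lemma o_lub: "S \<subseteq> M \<Longrightarrow> \<exists>u. is_lub M le S u" using oax4 by blast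
lemma o_oc: "x \<in> M \<Longrightarrow> oc x \<in> M \<and> oc (oc x) = x" using oax5 by blast
lemma o_anti: "x \<in> M \<Longrightarrow> y \<in> M \<Longrightarrow> le x y \<Longrightarrow> le (oc y) (oc x)" using oax6 by blast
lemma o_7: "x \<in> M \<Longrightarrow> lsup M le {x, oc x} = lsup M le M \<and> linf M le {x, oc x} = lsup M le {}" using oax7 by blast
lemma o_8: "x \<in> M \<Longrightarrow> y \<in> M \<Longrightarrow> le x y \<Longrightarrow> y = lsup M le {x, linf M le {y, oc x}}" using oax8 by blast

lemma o_glb: assumes S: "S \<subseteq> M" shows "\<exists>u. is_glb M le S u"
proof -
  define L where "L = {v \<in> M. \<forall>x\<in>S. le v x}"
  obtain u where u: "is_lub M le L u" using o_lub[of L] unfolding L_def by blast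
  have "is_glb M le S u" unfolding is_glb_def
  proof (intro conjI ballI impI)
    show "u \<in> M" using u unfolding is_lub_def by blast
    fix x assume "x \<in> S" then show "le u x" using u S unfolding is_lub_def L_def by blast
  next
    fix v assume "v \<in> M" "\<forall>x\<in>S. le v x" then show "le v u" using u unfolding is_lub_def L_def by blast
  qed
  then show ?thesis by blast
qed

lemma lub_unique: "is_lub M le S u \<Longrightarrow> is_lub M le S v \<Longrightarrow> u = v"
  unfolding is_lub_def using o_antisym by blast
lemma glb_unique: "is_glb M le S u \<Longrightarrow> is_glb M le S v \<Longrightarrow> u = v"
  unfolding is_glb_def using o_antisym by blast

lemma lsup_is: "S \<subseteq> M \<Longrightarrow> is_lub M le S (lsup M le S)"
proof -
  assume S: "S \<subseteq> M"
  obtain u where u: "is_lub M le S u" using o_lub[OF S] by blast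
  show ?thesis unfolding lsup_def by (rule theI[of _ u]) (use u lub_unique in blast)+
qed
lemma linf_is: "S \<subseteq> M \<Longrightarrow> is_glb M le S (linf M le S)"
proof -
  assume S: "S \<subseteq> M"
  obtain u where u: "is_glb M le S u" using o_glb[OF S] by blast
  show ?thesis unfolding linf_def by (rule theI[of _ u]) (use u glb_unique in blast)+
qed

lemma lub_tr: assumes "S \<subseteq> M" "u \<in> M" shows "is_lub M' le' (f ` S) (f u) \<longleftrightarrow> is_lub M le S u"
  unfolding is_lub_def MM using assms LE by (auto simp: subset_iff)  
lemma glb_tr: assumes "S \<subseteq> M" "u \<in> M" shows "is_glb M' le' (f ` S) (f u) \<longleftrightarrow> is_glb M le S u"
  unfolding is_glb_def MM using assms LE by (auto simp: subset_iff)

lemma lsup_tr: assumes S: "S \<subseteq> M" shows "lsup M' le' (f ` S) = f (lsup M le S)"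
proof -
  have l: "is_lub M le S (lsup M le S)" by (rule lsup_is[OF S])
  then have lM: "lsup M le S \<in> M" unfolding is_lub_def by blast
  show ?thesis unfolding lsup_def[of M']
  proof (rule the_equality)
    show "is_lub M' le' (f ` S) (f (lsup M le S))" using lub_tr[OF S lM] l by blast
    fix v' assume v': "is_lub M' le' (f ` S) v'"
    then have "v' \<in> f ` M" unfolding is_lub_def MM by blast
    then obtain v where v: "v \<in> M" "v' = f v" by blast
    then have "is_lub M le S v" using lub_tr[OF S v(1)] v' by simp
    then show "v' = f (lsup M le S)" using lub_unique l v by blast
  qed
qed

lemma linf_tr: assumes S: "S \<subseteq> M" shows "linf M' le' (f ` S) = f (linf M le S)"
proof -
  have l: "is_glb M le S (linf M le S)" by (rule linf_is[OF S])
  then have lM: "linf M le S \<in> M" unfolding is_glb_def by blast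
  show ?thesis unfolding linf_def[of M']
  proof (rule the_equality)
    show "is_glb M' le' (f ` S) (f (linf M le S))" using glb_tr[OF S lM] l by blast
    fix v' assume v': "is_glb M' le' (f ` S) v'"
    then have "v' \<in> f ` M" unfolding is_glb_def MM by blast
    then obtain v where v: "v \<in> M" "v' = f v" by blast
    then have "is_glb M le S v" using glb_tr[OF S v(1)] v' by simp
    then show "v' = f (linf M le S)" using glb_unique l v by blast
  qed
qed

lemma ball_tr: "(\<forall>x\<in>M'. P x) \<longleftrightarrow> (\<forall>x\<in>M. P (f x))" unfolding MM by simp
lemma allS_tr: "(\<forall>S. S \<subseteq> M' \<longrightarrow> P S) \<longleftrightarrow> (\<forall>S. S \<subseteq> M \<longrightarrow> P (f ` S))"
  unfolding MM subset_image_iff by auto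

lemma q1: "x \<in> M \<Longrightarrow> le' (f x) (f x)" using LE o_refl by simp
lemma q2: "x \<in> M \<Longrightarrow> y \<in> M \<Longrightarrow> le' (f x) (f y) \<and> le' (f y) (f x) \<longrightarrow> f x = f y" using LE[of x y] LE[of y x] o_antisym[of x y] by auto
lemma q3: "x \<in> M \<Longrightarrow> y \<in> M \<Longrightarrow> z \<in> M \<Longrightarrow> le' (f x) (f y) \<and> le' (f y) (f z) \<longrightarrow> le' (f x) (f z)"
  using LE[of x y] LE[of y z] LE[of x z] o_trans[of x y z] by auto
lemma q4: assumes S: "S \<subseteq> M" shows "\<exists>u. is_lub M' le' (f ` S) u"
proof
  have l: "is_lub M le S (lsup M le S)" by (rule lsup_is[OF S])
  then have lM: "lsup M le S \<in> M" unfolding is_lub_def by blast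
  show "is_lub M' le' (f ` S) (f (lsup M le S))" using lub_tr[OF S lM] l by blast
qed
lemma q5: "x \<in> M \<Longrightarrow> oc' (f x) \<in> M' \<and> oc' (oc' (f x)) = f x"
  using OC o_oc MM by auto
lemma q6: "x \<in> M \<Longrightarrow> y \<in> M \<Longrightarrow> le' (f x) (f y) \<longrightarrow> le' (oc' (f y)) (oc' (f x))"
  using OC o_oc LE o_anti by auto
lemma q7: assumes x: "x \<in> M" shows "lsup M' le' {f x, oc' (f x)} = lsup M' le' M' \<and> linf M' le' {f x, oc' (f x)} = lsup M' le' {}"
proof -
  have xo: "oc x \<in> M" using o_oc x by blast
  have s: "{x, oc x} \<subseteq> M" using x xo by blast
  have e: "{f x, oc' (f x)} = f ` {x, oc x}" using OC x by simp
  show ?thesis unfolding e using lsup_tr[OF s] linf_tr[OF s] lsup_tr[of M] lsup_tr[of "{}"] o_7[OF x] MM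
    by simp
qed
lemma q8: assumes x: "x \<in> M" and y: "y \<in> M" shows "le' (f x) (f y) \<longrightarrow> f y = lsup M' le' {f x, linf M' le' {f y, oc' (f x)}}"
proof
  assume "le' (f x) (f y)"
  then have l: "le x y" using LE x y by blast
  have xo: "oc x \<in> M" using o_oc x by blast
  have s: "{y, oc x} \<subseteq> M" using y xo by blast
  have lm: "linf M le {y, oc x} \<in> M" using linf_is[OF s] unfolding is_glb_def by blast
  have s2: "{x, linf M le {y, oc x}} \<subseteq> M" using x lm by blast
  have "linf M' le' {f y, oc' (f x)} = f (linf M le {y, oc x})"
    using linf_tr[OF s] OC[OF x] by simp
  then have "lsup M' le' {f x, linf M' le' {f y, oc' (f x)}} = f (lsup M le {x, linf M le {y, oc x}})"
    using lsup_tr[OF s2] by simp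
  then show "f y = lsup M' le' {f x, linf M' le' {f y, oc' (f x)}}" using o_8[OF x y l] by simp
qed

lemma oml_tr: "complete_oml M' le' oc'"
  unfolding complete_oml_def ball_tr allS_tr
  apply (intro conjI)
  subgoal by (intro ballI, rule q1, assumption+)
  subgoal by (intro ballI, rule q2, assumption+)
  subgoal by (intro ballI, rule q3, assumption+)
  subgoal by (intro allI impI, rule q4, assumption)
  subgoal by (intro ballI, rule q5, assumption+)
  subgoal by (intro ballI, rule q6, assumption+)
  subgoal by (intro ballI, rule q7, assumption+)
  subgoal by (intro ballI, rule q8, assumption+)
  done

end

lemma TODA_tr:
  fixes T :: "'a ida \<Rightarrow> 'a set" and T' :: "'c ida \<Rightarrow> 'c set" and K :: "'a ida" and K' :: "'c ida"
  assumes TO: "T_ODA T K" and MOR: "ida_morphism K K' f" and BIJ: "bij_betw f (ida_carrier K) (ida_carrier K')"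
    and TT: "T' K' = f ` T K" and TC: "T K \<subseteq> ida_carrier K"
  shows "T_ODA T' K'"
proof -
  have IDA: "is_IDA K" using TO unfolding T_ODA_def by blast
  have OML: "complete_oml (ida_tests K) (test_le K) (ida_neg K)" using TO unfolding T_ODA_def by blast
  have TODA2: "\<And>A. T K \<subseteq> A \<Longrightarrow> A \<subseteq> ida_carrier K \<Longrightarrow>
          (\<forall>x\<in>A. \<forall>y\<in>A. ida_mult K x y \<in> A) \<Longrightarrow> (\<forall>x\<in>A. ida_inv K x \<in> A) \<Longrightarrow>
          (\<forall>S. S \<subseteq> A \<longrightarrow> ida_jn K S \<in> A) \<Longrightarrow> A = ida_carrier K"
    using TO unfolding T_ODA_def by blast
  have TODA3: "\<And>S R. S \<subseteq> T K \<Longrightarrow> R \<subseteq> T K \<Longrightarrow> ida_jn K S = ida_jn K R \<longleftrightarrow> S = R"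
    using TO unfolding T_ODA_def by blast
  have TODA4: "\<And>s t. s \<in> T K \<Longrightarrow> t \<in> T K \<Longrightarrow> s = t \<longleftrightarrow> ida_equiv K s t"
    using TO unfolding T_ODA_def by blast
  note X = IDA MOR BIJ
  have finj: "\<And>x y. x \<in> ida_carrier K \<Longrightarrow> y \<in> ida_carrier K \<Longrightarrow> f x = f y \<longleftrightarrow> x = y" using f_inj[OF X] .
  have tC: "ida_tests K \<subseteq> ida_carrier K" using tests_C[OF X] .
  have c1: "is_IDA K'" using IDA'[OF X] .
  have c2: "complete_oml (ida_tests K') (test_le K') (ida_neg K')"
  proof (rule oml_tr[OF OML])
    show "bij_betw f (ida_tests K) (ida_tests K')"
      unfolding tests_img[OF X] by (rule bij_betw_imageI[OF inj_on_subset[OF bij_betw_imp_inj_on[OF BIJ] tC] refl])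
    fix a b assume "a \<in> ida_tests K" "b \<in> ida_tests K"
    then have "a \<in> ida_carrier K" "b \<in> ida_carrier K" using tC by auto
    then show "test_le K' (f a) (f b) = test_le K a b" by (rule tle_f[OF X])
  next
    fix a assume "a \<in> ida_tests K"
    then have "a \<in> ida_carrier K" using tC by auto
    then show "ida_neg K' (f a) = f (ida_neg K a)" by (rule f_n[OF X, symmetric])
  qed
  have c3: "\<forall>A. T' K' \<subseteq> A \<and> A \<subseteq> ida_carrier K' \<and>
          (\<forall>x\<in>A. \<forall>y\<in>A. ida_mult K' x y \<in> A) \<and> (\<forall>x\<in>A. ida_inv K' x \<in> A) \<and>
          (\<forall>S. S \<subseteq> A \<longrightarrow> ida_jn K' S \<in> A) \<longrightarrow> A = ida_carrier K'"
  proof (intro allI impI, elim conjE)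
    fix A assume A1: "T' K' \<subseteq> A" and A2: "A \<subseteq> ida_carrier K'"
      and A3: "\<forall>x\<in>A. \<forall>y\<in>A. ida_mult K' x y \<in> A" and A4: "\<forall>x\<in>A. ida_inv K' x \<in> A"
      and A5: "\<forall>S. S \<subseteq> A \<longrightarrow> ida_jn K' S \<in> A"
    define B where "B = {x \<in> ida_carrier K. f x \<in> A}"
    have "B = ida_carrier K"
    proof (rule TODA2)
      show "T K \<subseteq> B" using A1 TT TC unfolding B_def by blast
      show "B \<subseteq> ida_carrier K" unfolding B_def by blast
      show "\<forall>x\<in>B. \<forall>y\<in>B. ida_mult K x y \<in> B" unfolding B_def using A3 f_m[OF X] m_closed[OF IDA] by simp
      show "\<forall>x\<in>B. ida_inv K x \<in> B" unfolding B_def using A4 f_i[OF X] i_closed[OF IDA] by simp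
      show "\<forall>S. S \<subseteq> B \<longrightarrow> ida_jn K S \<in> B"
      proof (intro allI impI)
        fix S assume S: "S \<subseteq> B"
        then have "S \<subseteq> ida_carrier K" "f ` S \<subseteq> A" unfolding B_def by auto
        then show "ida_jn K S \<in> B" unfolding B_def using A5 f_jn[OF X] jn_closed[OF IDA] by simp
      qed
    qed
    then have "ida_carrier K' \<subseteq> A" unfolding imgC[OF X] B_def by blast
    then show "A = ida_carrier K'" using A2 by blast
  qed
  have c4: "\<forall>S R. S \<subseteq> T' K' \<and> R \<subseteq> T' K' \<longrightarrow> (ida_jn K' S = ida_jn K' R \<longleftrightarrow> S = R)"
  proof (intro allI impI, elim conjE)
    fix S' R' assume "S' \<subseteq> T' K'" "R' \<subseteq> T' K'"
    then obtain S R where S: "S \<subseteq> T K" "S' = f ` S" and R: "R \<subseteq> T K" "R' = f ` R"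
      unfolding TT subset_image_iff by blast
    have SC: "S \<subseteq> ida_carrier K" "R \<subseteq> ida_carrier K" using S R TC by auto
    have "ida_jn K' S' = ida_jn K' R' \<longleftrightarrow> ida_jn K S = ida_jn K R"
      unfolding S(2) R(2) f_jn[OF X SC(1), symmetric] f_jn[OF X SC(2), symmetric]
      using finj jn_closed[OF IDA SC(1)] jn_closed[OF IDA SC(2)] by blast
    also have "\<dots> \<longleftrightarrow> S = R" using TODA3 S R by blast
    also have "\<dots> \<longleftrightarrow> f ` S = f ` R"
      using BIJ SC unfolding bij_betw_def by (metis inj_on_image_eq_iff)
    finally show "(ida_jn K' S' = ida_jn K' R') = (S' = R')" using S R by simp
  qed
  have c5: "\<forall>s\<in>T' K'. \<forall>t\<in>T' K'. s = t \<longleftrightarrow> ida_equiv K' s t"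
    unfolding TT
  proof (intro ballI)
    fix s' t' assume "s' \<in> f ` T K" "t' \<in> f ` T K"
    then obtain s t where s: "s \<in> T K" "s' = f s" and t: "t \<in> T K" "t' = f t" by blast
    have sC: "s \<in> ida_carrier K" "t \<in> ida_carrier K" using s t TC by auto
    show "(s' = t') = ida_equiv K' s' t'"
      unfolding s(2) t(2) equiv_f[OF X sC] using TODA4[OF s(1) t(1)] finj[OF sC] by blast
  qed
  show ?thesis unfolding T_ODA_def by (intro conjI c1 c2 c3 c4 c5)
qed

theorem lemma4p5:
  fixes Ta :: "'a ida \<Rightarrow> 'a set"
    and Tp :: "'a set ida \<Rightarrow> 'a set set"
    and TLa :: "('a \<Rightarrow> 'a) ida \<Rightarrow> ('a \<Rightarrow> 'a) set"
    and TLp :: "('a set \<Rightarrow> 'a set) ida \<Rightarrow> ('a set \<Rightarrow> 'a set) set"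
    and TPa :: "('a \<Rightarrow> 'a) set ida \<Rightarrow> ('a \<Rightarrow> 'a) set set"
    and TPp :: "('a set \<Rightarrow> 'a set) set ida \<Rightarrow> ('a set \<Rightarrow> 'a set) set set"
    and K :: "'a ida"
  assumes "T_functor Ta Tp TLa TLp TPa TPp"
    and "T_ODA Ta K"
  shows "atomic_lattice K \<and> {a. ida_atom K a} = Ta K \<and>
         T_ODA Tp (PT Ta K) \<and> ida_iso K (PT Ta K) (hK Ta K)"
proof -
  have T1a: "T1_cond Ta" and T1p: "T1_cond Tp" and T4ap: "T4_cond Ta Tp" and T4pa: "T4_cond Tp Ta"
    using assms(1) unfolding T_functor_def by auto
  note TO = assms(2)
  have IDAK: "is_IDA K" using TO unfolding T_ODA_def by blast
  have TCa: "Ta K \<subseteq> ida_carrier K" by (rule TC[OF T1a TO])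
  let ?h = "hK Ta K" and ?P = "PT Ta K"
  have carP: "ida_carrier ?P = Pow (Ta K)" by (simp add: PT_def)
  have jnh: "\<And>x. x \<in> ida_carrier K \<Longrightarrow> ida_jn K (?h x) = x" by (rule jn_h[OF T1a TO])
  have hjn: "\<And>S. S \<subseteq> Ta K \<Longrightarrow> ?h (ida_jn K S) = S" by (rule h_jn[OF T1a TO])
  have hsub: "\<And>x. ?h x \<subseteq> Ta K" by (rule h_sub[OF T1a TO])
  have MOR: "ida_morphism K ?P ?h"
    unfolding ida_morphism_def
  proof (intro conjI ballI allI impI)
    show "?h \<in> ida_carrier K \<rightarrow> ida_carrier ?P" unfolding carP using hsub by blast
    fix S assume S: "S \<subseteq> ida_carrier K"
    have "ida_jn K S = ida_jn K (ida_jn K ` (?h ` S))"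
      unfolding image_image using jnh S by (intro arg_cong[where f="ida_jn K"]) (simp add: subset_iff)
    also have "\<dots> = ida_jn K (\<Union> (?h ` S))"
    proof (rule jn_jn[OF IDAK])
      fix X assume "X \<in> ?h ` S" then show "X \<subseteq> ida_carrier K" using hsub TCa by blast
    qed
    finally have "?h (ida_jn K S) = \<Union> (?h ` S)" using hjn[of "\<Union> (?h ` S)"] hsub by auto
    then show "?h (ida_jn K S) = ida_jn ?P (?h ` S)" by (simp add: PT_def)
  next
    fix x y assume x: "x \<in> ida_carrier K" and y: "y \<in> ida_carrier K"
    show "?h (ida_mult K x y) = ida_mult ?P (?h x) (?h y)" by (simp add: PT_def jnh x y)
  next
    fix x assume x: "x \<in> ida_carrier K"
    show "?h (ida_inv K x) = ida_inv ?P (?h x)" by (simp add: PT_def jnh x)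
    show "?h (ida_neg K x) = ida_neg ?P (?h x)" by (simp add: PT_def jnh x)
  next
    have "?h (ida_unit K) = {ida_unit K}"
      using hjn[of "{ida_unit K}"] T_e[OF T1a TO] T_jn[OF T1a TO] by simp
    then show "?h (ida_unit K) = ida_unit ?P" by (simp add: PT_def)
  qed
  have BIJ: "bij_betw ?h (ida_carrier K) (ida_carrier ?P)"
    unfolding carP
  proof (rule bij_betwI')
    fix x y assume "x \<in> ida_carrier K" "y \<in> ida_carrier K"
    then show "(?h x = ?h y) = (x = y)" using jnh by metis
  next
    fix x show "?h x \<in> Pow (Ta K)" using hsub by blast
  next
    fix S assume "S \<in> Pow (Ta K)"
    then have "S \<subseteq> Ta K" by blast
    then have "ida_jn K S \<in> ida_carrier K" "S = ?h (ida_jn K S)" using jn_closed[OF IDAK] TCa hjn by auto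
    then show "\<exists>x\<in>ida_carrier K. S = ?h x" by blast
  qed
  note X = IDAK MOR BIJ
  have IDAP: "is_IDA ?P" by (rule IDA'[OF X])
  have hT: "?h ` Ta K \<subseteq> Tp ?P" using T4ap IDAK IDAP MOR unfolding T4_cond_def by blast
  have gmor: "ida_morphism ?P K (ginv K ?h)" by (rule g_mor[OF X])
  have gT: "ginv K ?h ` Tp ?P \<subseteq> Ta K" using T4pa IDAK IDAP gmor unfolding T4_cond_def by blast
  have TpC: "Tp ?P \<subseteq> ida_carrier ?P" using T1p IDAP unfolding T1_cond_def by blast
  have TT: "Tp ?P = ?h ` Ta K"
  proof
    show "?h ` Ta K \<subseteq> Tp ?P" by (rule hT)
    show "Tp ?P \<subseteq> ?h ` Ta K"
    proof
      fix y assume y: "y \<in> Tp ?P"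
      then have "y = ?h (ginv K ?h y)" using f_g[OF X] TpC by auto
      moreover have "ginv K ?h y \<in> Ta K" using gT y by blast
      ultimately show "y \<in> ?h ` Ta K" by blast
    qed
  qed
  have TODAP: "T_ODA Tp ?P" by (rule TODA_tr[where T'=Tp, OF TO MOR BIJ TT TCa])
  show ?thesis
    using atomic[OF T1a TO] atoms[OF T1a TO] TODAP MOR BIJ unfolding ida_iso_def by blast
qed

end
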